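(* Let $d,n\in\mathbb N$ with $n\ge 2$, $Q,K\in\mathbb R^{d\times d}$, $V:=I_d$, and $A:=K^\top Q/\sqrt d$. Assume $A$ has at least one real eigenvalue, and let $\gamma_1\ge\dots\ge\gamma_\delta$ be the real eigenvalues of $A$. Set $\gamma:=\max(-\gamma_\delta,\gamma_1/8)$. Then for every $R>0$, the self-attention map $f$ with parameters $(A,V)$ satisfies $$\mathrm{Lip}\big(f_{|B_R^n}\big)\ge\frac{\sqrt{n-1}}{1+(n-1)e^{-2R^2\gamma}}.$$
   Context: For $X=(x_1,\dots,x_n)\in(\mathbb R^d)^n$, self-attention with parameters $(A,V)$ is $f(X)=\big(V\sum_{j=1}^nP_{ij}x_j\big)_{1\le i\le n}$, where $P_{ij}=\exp(x_i^\top A^\top x_j)/\sum_{l=1}^n\exp(x_i^\top A^\top x_l)$. $(\mathbb R^d)^n$ carries the Frobenius norm $\|X\|_F=(\sum_i|x_i|^2)^{1/2}$. $B_R\subset\mathbb R^d$ is the closed Euclidean ball of center $0$ and radius $R$, and $\mathrm{Lip}(f_{|\mathcal X})=\sup_{X\ne Y\in\mathcal X}\|f(X)-f(Y)\|_F/\|X-Y\|_F$. *)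

theory Defs
  imports "HOL-Analysis.Analysis"
begin

text \<open>Token sequences X = (x_1,...,x_n) are functions from a finite index type 'n
  to R^d (= real^'d). Parameters A and V are d x d matrices.\<close>

definition attn_P :: "real^'d^'d \<Rightarrow> ('n::finite \<Rightarrow> real^'d) \<Rightarrow> 'n \<Rightarrow> 'n \<Rightarrow> real" where
  "attn_P A X i j =
     exp (X i \<bullet> (transpose A *v X j)) / (\<Sum>l\<in>UNIV. exp (X i \<bullet> (transpose A *v X l)))"

definition self_attention ::
  "real^'d^'d \<Rightarrow> real^'d^'d \<Rightarrow> ('n::finite \<Rightarrow> real^'d) \<Rightarrow> ('n \<Rightarrow> real^'d)" where
  "self_attention A V X = (\<lambda>i. V *v (\<Sum>j\<in>UNIV. attn_P A X i j *\<^sub>R X j))"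

definition frob_norm :: "('n::finite \<Rightarrow> real^'d) \<Rightarrow> real" where
  "frob_norm X = sqrt (\<Sum>i\<in>UNIV. (norm (X i))\<^sup>2)"

definition lip_on ::
  "('n::finite \<Rightarrow> real^'d) set \<Rightarrow> (('n \<Rightarrow> real^'d) \<Rightarrow> ('n \<Rightarrow> real^'d)) \<Rightarrow> ereal" where
  "lip_on S f = (SUP XY \<in> {(X,Y). X \<in> S \<and> Y \<in> S \<and> X \<noteq> Y}.
       ereal (frob_norm (f (fst XY) - f (snd XY)) / frob_norm (fst XY - snd XY)))"

definition ball_tokens :: "real \<Rightarrow> ('n::finite \<Rightarrow> real^'d) set" where
  "ball_tokens R = {X. \<forall>i. X i \<in> cball 0 R}"

definition real_eigenvalues :: "real^'d^'d \<Rightarrow> real set" where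
  "real_eigenvalues A = {c. \<exists>v. v \<noteq> 0 \<and> A *v v = c *\<^sub>R v}"

end

theory Submission
  imports Defs
begin


lemma inner_AT:
  fixes A :: "real^'d^'d"
  assumes "A *v u = lam *\<^sub>R u" "norm u = 1"
  shows "(a *\<^sub>R u) \<bullet> (transpose A *v (b *\<^sub>R u)) = lam * a * b"
proof -
  have "(a *\<^sub>R u) \<bullet> (transpose A *v (b *\<^sub>R u)) = (A *v (a *\<^sub>R u)) \<bullet> (b *\<^sub>R u)"
    by (metis dot_lmul_matrix vector_transpose_matrix)
  also have "\<dots> = lam * a * b * (u \<bullet> u)"
    by (simp add: matrix_vector_mult_scaleR assms(1))
  also have "u \<bullet> u = 1" using assms(2) by (simp add: norm_eq_1)
  finally show ?thesis by simp
qed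

lemma attn_line:
  fixes A :: "real^'d^'d" and X :: "'n::finite \<Rightarrow> real^'d"
  assumes "A *v u = lam *\<^sub>R u" "norm u = 1" "\<And>j. X j = c j *\<^sub>R u"
  shows "self_attention A (mat 1) X i =
     ((\<Sum>j\<in>UNIV. exp (lam * c i * c j) * c j) / (\<Sum>l\<in>UNIV. exp (lam * c i * c l))) *\<^sub>R u"
proof -
  have e: "X i \<bullet> (transpose A *v X j) = lam * c i * c j" for j
    using inner_AT[OF assms(1,2)] assms(3) by simp
  show ?thesis
    unfolding self_attention_def attn_P_def matrix_vector_mul_lid e
    by (simp add: assms(3) scaleR_sum_left sum_divide_distrib)
qed



lemma eig_indep:
  fixes A :: "real^'d^'d" and v :: "real \<Rightarrow> real^'d"
  assumes fin: "finite S" and ev: "\<And>c. c \<in> S \<Longrightarrow> A *v v c = c *\<^sub>R v c \<and> v c \<noteq> 0"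
  shows "\<forall>k. (\<Sum>c\<in>S. k c *\<^sub>R v c) = 0 \<longrightarrow> (\<forall>c\<in>S. k c = 0)"
  using fin ev
proof (induction S rule: finite_induct)
  case empty then show ?case by simp
next
  case (insert a S)
  show ?case
  proof (intro allI impI)
    fix k assume s0: "(\<Sum>c\<in>insert a S. k c *\<^sub>R v c) = 0"
    have s1: "k a *\<^sub>R v a + (\<Sum>c\<in>S. k c *\<^sub>R v c) = 0"
      using s0 insert by simp
    have "A *v (k a *\<^sub>R v a + (\<Sum>c\<in>S. k c *\<^sub>R v c)) = 0" using s1 by simp
    hence s2: "(k a * a) *\<^sub>R v a + (\<Sum>c\<in>S. (k c * c) *\<^sub>R v c) = 0"
      using insert.prems
      by (simp add: matrix_vector_right_distrib matrix_vector_mult_scaleR linear_sum[OF matrix_vector_mul_linear]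
          o_def)
    have "(\<Sum>c\<in>S. (k c * (c - a)) *\<^sub>R v c) = (\<Sum>c\<in>S. (k c * c) *\<^sub>R v c) - a *\<^sub>R (\<Sum>c\<in>S. k c *\<^sub>R v c)"
      by (simp add: scaleR_sum_right sum_subtractf algebra_simps)
    also have "\<dots> = 0"
    proof -
      have "(\<Sum>c\<in>S. (k c * c) *\<^sub>R v c) = - ((k a * a) *\<^sub>R v a)" using s2 by (simp add: eq_neg_iff_add_eq_0 add.commute)
      moreover have "(\<Sum>c\<in>S. k c *\<^sub>R v c) = - (k a *\<^sub>R v a)" using s1 by (simp add: eq_neg_iff_add_eq_0 add.commute)
      ultimately show ?thesis by (simp add: algebra_simps)
    qed
    finally have z: "(\<Sum>c\<in>S. (k c * (c - a)) *\<^sub>R v c) = 0" .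
    have IH: "\<forall>k. (\<Sum>c\<in>S. k c *\<^sub>R v c) = 0 \<longrightarrow> (\<forall>c\<in>S. k c = 0)"
      using insert.IH insert.prems by auto
    have "\<forall>c\<in>S. k c * (c - a) = 0" using IH[rule_format, of "\<lambda>c. k c * (c - a)", OF z] by blast
    hence kS: "\<forall>c\<in>S. k c = 0" using insert.hyps(2) by auto
    hence "k a *\<^sub>R v a = 0" using s1 by simp
    hence "k a = 0" using insert.prems by simp
    with kS show "\<forall>c\<in>insert a S. k c = 0" by simp
  qed
qed

lemma eig_finite:
  fixes A :: "real^'d^'d"
  shows "finite (real_eigenvalues A)"
proof (rule ccontr)
  assume inf: "infinite (real_eigenvalues A)"
  define v where "v c = (SOME w. w \<noteq> 0 \<and> A *v w = c *\<^sub>R w)" for c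
  have ev: "A *v v c = c *\<^sub>R v c \<and> v c \<noteq> 0" if "c \<in> real_eigenvalues A" for c
    using someI_ex[of "\<lambda>w. w \<noteq> 0 \<and> A *v w = c *\<^sub>R w"] that
    unfolding v_def real_eigenvalues_def by auto
  obtain S where S: "S \<subseteq> real_eigenvalues A" "finite S" "card S = Suc DIM(real^'d)"
    using infinite_arbitrarily_large[OF inf] by blast
  have evS: "\<And>c. c \<in> S \<Longrightarrow> A *v v c = c *\<^sub>R v c \<and> v c \<noteq> 0" using ev S(1) by auto
  note ind = eig_indep[OF S(2) evS]
  have inj: "inj_on v S"
  proof (rule inj_onI, rule ccontr)
    fix x y assume xy: "x \<in> S" "y \<in> S" "v x = v y" "x \<noteq> y"
    define k where "k c = (if c = x then 1 else if c = y then -1 else (0::real))" for c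
    have "(\<Sum>c\<in>S. k c *\<^sub>R v c) = (\<Sum>c\<in>{x,y}. k c *\<^sub>R v c)"
      by (rule sum.mono_neutral_right) (use S(2) xy in \<open>auto simp: k_def\<close>)
    also have "\<dots> = 0" using xy by (simp add: k_def)
    finally have "k x = 0" using ind xy by blast
    then show False by (simp add: k_def)
  qed
  have "independent (v ` S)"
  proof (rule independent_if_scalars_zero)
    show "finite (v ` S)" using S(2) by simp
    fix f x assume f: "(\<Sum>x\<in>v ` S. f x *\<^sub>R x) = 0" and x: "x \<in> v ` S"
    have "(\<Sum>c\<in>S. (f (v c)) *\<^sub>R v c) = 0" using f sum.reindex[OF inj, of "\<lambda>x. f x *\<^sub>R x"] by simp
    then show "f x = 0" using ind x by auto
  qed
  hence "card (v ` S) \<le> DIM(real^'d)" using independent_bound by blast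
  with card_image[OF inj] S(3) show False by simp
qed



lemma G_ineq:
  fixes m p q s K :: real
  assumes K: "K > 0" and mpq: "m * (p - q) \<ge> 0" and sp: "s \<noteq> p"
  shows "exp (m * s) / (exp (m * s) + K) \<le>
     ((exp (m * s) * s + K * q) / (exp (m * s) + K) - (exp (m * p) * p + K * q) / (exp (m * p) + K)) / (s - p)"
proof -
  define a where "a = exp (m * s)"
  define b where "b = exp (m * p)"
  have a0: "a > 0" and b0: "b > 0" by (auto simp: a_def b_def)
  define ws where "ws = a / (a + K)"
  define wp where "wp = b / (b + K)"
  have Gs: "(a * s + K * q) / (a + K) = q + (s - q) * ws"
    using a0 K by (simp add: ws_def field_simps)
  have Gp: "(b * p + K * q) / (b + K) = q + (p - q) * wp"
    using b0 K by (simp add: wp_def field_simps)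
  have dw: "ws - wp = (a - b) * K / ((a + K) * (b + K))"
    using a0 b0 K by (simp add: ws_def wp_def field_simps)
  have ab: "(a - b) * (m * s - m * p) \<ge> 0"
  proof (cases "m * s \<le> m * p")
    case True
    then have "a \<le> b" by (simp add: a_def b_def)
    with True show ?thesis by (simp add: mult_nonpos_nonpos)
  next
    case False
    then have "a \<ge> b" by (simp add: a_def b_def)
    with False show ?thesis by simp
  qed
  have h1: "(ws - wp) * (m * (s - p)) \<ge> 0"
  proof -
    have "(ws - wp) * (m * (s - p)) = ((a - b) * (m * s - m * p)) * (K / ((a + K) * (b + K)))"
      using a0 b0 K by (simp add: dw field_simps)
    also have "\<dots> \<ge> 0" using ab a0 b0 K by simp
    finally show ?thesis .
  qed
  have h2: "(p - q) * (ws - wp) * (s - p) \<ge> 0"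
  proof (cases "m = 0")
    case True
    then have "ws = wp" by (simp add: ws_def wp_def a_def b_def)
    then show ?thesis by simp
  next
    case False
    have "((p - q) * (ws - wp) * (s - p)) * (m * m) = (m * (p - q)) * ((ws - wp) * (m * (s - p)))"
      by (simp add: algebra_simps)
    also have "\<dots> \<ge> 0" using mpq h1 by simp
    finally have "0 \<le> ((p - q) * (ws - wp) * (s - p)) * (m * m)" .
    moreover have "m * m > 0" using False by (auto simp add: zero_less_mult_iff linorder_neq_iff)
    ultimately show ?thesis by (metis linorder_not_le mult_neg_pos)
  qed
  have "(q + (s - q) * ws - (q + (p - q) * wp)) / (s - p) = ws + ((p - q) * (ws - wp) * (s - p)) / ((s - p) * (s - p))"
  proof -
    have sp': "s - p \<noteq> 0" using sp by simp
    have "q + (s - q) * ws - (q + (p - q) * wp) = (s - p) * ws + (p - q) * (ws - wp)"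
      by (simp add: algebra_simps)
    hence "(q + (s - q) * ws - (q + (p - q) * wp)) / (s - p) = ws + (p - q) * (ws - wp) / (s - p)"
      using sp' by (simp add: add_divide_distrib)
    also have "(p - q) * (ws - wp) / (s - p) = ((p - q) * (ws - wp) * (s - p)) / ((s - p) * (s - p))"
      using sp' by simp
    finally show ?thesis .
  qed
  also have "\<dots> \<ge> ws"
  proof -
    have "0 \<le> ((p - q) * (ws - wp) * (s - p)) / ((s - p) * (s - p))"
      by (rule divide_nonneg_nonneg[OF h2]) simp
    then show ?thesis by linarith
  qed
  finally show ?thesis using Gs Gp by (simp add: a_def b_def ws_def)
qed



lemma key:
  fixes A :: "real^'d^'d" and u :: "real^'d"
  assumes n2: "CARD('n::finite) \<ge> 2" and eu: "A *v u = lam *\<^sub>R u" and nu: "norm u = 1"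
    and p0: "p \<noteq> 0" and pR: "\<bar>p\<bar> \<le> R" and qR: "\<bar>q\<bar> \<le> R" and cond: "lam * q * (p - q) \<ge> 0"
  shows "ereal (sqrt (real CARD('n) - 1) / (1 + (real CARD('n) - 1) * exp (- (lam * q * (p - q)))))
     \<le> lip_on (ball_tokens R :: ('n \<Rightarrow> real^'d) set) (self_attention A (mat 1))"
proof -
  define N where "N = real CARD('n) - 1"
  have N1: "N \<ge> 1" using n2 by (simp add: N_def)
  obtain i0 :: 'n where True by blast
  define m where "m = lam * q"
  define E0 where "E0 = exp (lam * q * q)"
  define K where "K = N * E0"
  have K0: "K > 0" using N1 by (simp add: K_def E0_def)
  define c where "c s j = (if j = i0 then s else q)" for s and j :: 'n
  define X where "X s = (\<lambda>j. c s j *\<^sub>R u)" for s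
  define G where "G s = (exp (m * s) * s + K * q) / (exp (m * s) + K)" for s
  define w where "w s = exp (m * s) / (exp (m * s) + K)" for s
  have cardm: "card (UNIV - {i0}) = CARD('n) - 1" by (simp add: card_Diff_subset)
  have realcard: "real (card (UNIV - {i0} :: 'n set)) = N"
    using cardm n2 by (simp add: N_def of_nat_diff)
  have fX: "self_attention A (mat 1) (X s) i = G s *\<^sub>R u" if "i \<noteq> i0" for s i
  proof -
    have "self_attention A (mat 1) (X s) i =
      ((\<Sum>j\<in>UNIV. exp (lam * c s i * c s j) * c s j) / (\<Sum>l\<in>UNIV. exp (lam * c s i * c s l))) *\<^sub>R u"
      by (rule attn_line[OF eu nu]) (simp add: X_def)
    also have "(\<Sum>j\<in>UNIV. exp (lam * c s i * c s j) * c s j) = exp (m * s) * s + K * q"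
    proof -
      have "(\<Sum>j\<in>UNIV. exp (lam * c s i * c s j) * c s j)
          = exp (lam * c s i * c s i0) * c s i0 + (\<Sum>j\<in>UNIV - {i0}. exp (lam * c s i * c s j) * c s j)"
        by (simp add: sum.remove)
      also have "(\<Sum>j\<in>UNIV - {i0}. exp (lam * c s i * c s j) * c s j) = (\<Sum>j\<in>UNIV - {i0}. E0 * q)"
        by (rule sum.cong) (auto simp: c_def E0_def that)
      finally show ?thesis using that realcard by (simp add: c_def m_def K_def)
    qed
    also have "(\<Sum>j\<in>UNIV. exp (lam * c s i * c s j)) = exp (m * s) + K"
    proof -
      have "(\<Sum>j\<in>UNIV. exp (lam * c s i * c s j))
          = exp (lam * c s i * c s i0) + (\<Sum>j\<in>UNIV - {i0}. exp (lam * c s i * c s j))"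
        by (simp add: sum.remove)
      also have "(\<Sum>j\<in>UNIV - {i0}. exp (lam * c s i * c s j)) = (\<Sum>j\<in>UNIV - {i0}. E0)"
        by (rule sum.cong) (auto simp: c_def E0_def that)
      finally show ?thesis using that realcard by (simp add: c_def m_def K_def)
    qed
    finally show ?thesis by (simp add: G_def)
  qed
  have Xball: "X s \<in> ball_tokens R" if "\<bar>s\<bar> \<le> R" for s
    using that qR by (auto simp: ball_tokens_def X_def c_def nu)
  have frobX: "frob_norm (X s - X p) = \<bar>s - p\<bar>" for s
  proof -
    have "(\<Sum>i\<in>UNIV. (norm ((X s - X p) i))\<^sup>2) = (\<Sum>i\<in>UNIV. if i = i0 then (s - p)\<^sup>2 else 0)"
      by (rule sum.cong) (auto simp: X_def c_def nu algebra_simps simp flip: scaleR_diff_left)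
    also have "\<dots> = (s - p)\<^sup>2" by simp
    finally show ?thesis by (simp add: frob_norm_def)
  qed
  have frobf: "frob_norm (self_attention A (mat 1) (X s) - self_attention A (mat 1) (X p))
      \<ge> sqrt N * \<bar>G s - G p\<bar>" for s
  proof -
    have "sqrt N * \<bar>G s - G p\<bar> = sqrt (\<Sum>i\<in>UNIV - {i0}. (G s - G p)\<^sup>2)"
      using realcard N1 by (simp add: real_sqrt_mult)
    also have "(\<Sum>i\<in>UNIV - {i0}. (G s - G p)\<^sup>2)
       = (\<Sum>i\<in>UNIV - {i0}. (norm ((self_attention A (mat 1) (X s) - self_attention A (mat 1) (X p)) i))\<^sup>2)"
      by (rule sum.cong) (auto simp: fX nu simp flip: scaleR_diff_left)
    also have "\<dots> \<le> (\<Sum>i\<in>UNIV. (norm ((self_attention A (mat 1) (X s) - self_attention A (mat 1) (X p)) i))\<^sup>2)"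
      by (rule sum_mono2) auto
    finally show ?thesis unfolding frob_norm_def by (simp add: real_sqrt_le_iff)
  qed
  have bound: "ereal (sqrt N * w s) \<le> lip_on (ball_tokens R :: ('n \<Rightarrow> real^'d) set) (self_attention A (mat 1))"
    if sR: "\<bar>s\<bar> \<le> R" and sp: "s \<noteq> p" for s
  proof -
    have ne: "X s \<noteq> X p"
    proof
      assume "X s = X p"
      then have "X s i0 = X p i0" by simp
      then have "s *\<^sub>R u = p *\<^sub>R u" by (simp add: X_def c_def)
      then show False using sp nu by (metis norm_zero scaleR_cancel_right zero_neq_one)
    qed
    have mem: "(X s, X p) \<in> {(X,Y). X \<in> ball_tokens R \<and> Y \<in> ball_tokens R \<and> X \<noteq> Y}"
      using Xball[OF sR] Xball[OF pR] ne by simp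
    have "w s \<le> (G s - G p) / (s - p)"
      unfolding w_def G_def by (rule G_ineq[OF K0 _ sp]) (use cond in \<open>simp add: m_def\<close>)
    also have "\<dots> \<le> \<bar>G s - G p\<bar> / \<bar>s - p\<bar>"
      by (metis abs_divide abs_ge_self)
    finally have h: "w s \<le> \<bar>G s - G p\<bar> / \<bar>s - p\<bar>" .
    have "sqrt N * w s \<le> sqrt N * \<bar>G s - G p\<bar> / \<bar>s - p\<bar>"
      using mult_left_mono[OF h, of "sqrt N"] N1 by simp
    also have "\<dots> \<le> frob_norm (self_attention A (mat 1) (X s) - self_attention A (mat 1) (X p)) / frob_norm (X s - X p)"
      unfolding frobX using divide_right_mono[OF frobf[of s], of "\<bar>s - p\<bar>"] by simp
    finally have "ereal (sqrt N * w s) \<le> ereal (frob_norm (self_attention A (mat 1) (X s) - self_attention A (mat 1) (X p)) / frob_norm (X s - X p))"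
      by simp
    also have "\<dots> \<le> lip_on (ball_tokens R :: ('n \<Rightarrow> real^'d) set) (self_attention A (mat 1))"
      unfolding lip_on_def using SUP_upper[OF mem, of "\<lambda>XY. ereal (frob_norm (self_attention A (mat 1) (fst XY) - self_attention A (mat 1) (snd XY)) / frob_norm (fst XY - snd XY))"] by simp
    finally show ?thesis .
  qed
  have lim: "((\<lambda>t. ereal (sqrt N * w ((1 - t) * p))) \<longlongrightarrow> ereal (sqrt N * w p)) (at_right 0)"
  proof -
    have "isCont (\<lambda>t. sqrt N * w ((1 - t) * p)) 0"
      unfolding w_def
      apply (intro continuous_intros)
      using K0 apply (smt (verit) exp_gt_zero)
      done
    then have "((\<lambda>t. sqrt N * w ((1 - t) * p)) \<longlongrightarrow> sqrt N * w ((1 - 0) * p)) (at 0)"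
      by (rule isContD)
    then have "((\<lambda>t. sqrt N * w ((1 - t) * p)) \<longlongrightarrow> sqrt N * w p) (at 0)"
      by simp
    then have "((\<lambda>t. sqrt N * w ((1 - t) * p)) \<longlongrightarrow> sqrt N * w p) (at_right 0)"
      by (rule tendsto_mono[rotated]) (simp add: at_le)
    then show ?thesis by (rule tendsto_ereal)
  qed
  have ev: "eventually (\<lambda>t. ereal (sqrt N * w ((1 - t) * p)) \<le> lip_on (ball_tokens R :: ('n \<Rightarrow> real^'d) set) (self_attention A (mat 1))) (at_right 0)"
  proof -
    have "eventually (\<lambda>t. t \<in> {0<..<1::real}) (at_right 0)"
      by (rule eventually_at_right_real) simp
    then show ?thesis
    proof (rule eventually_mono)
      fix t :: real assume t: "t \<in> {0<..<1}"
      show "ereal (sqrt N * w ((1 - t) * p)) \<le> lip_on (ball_tokens R :: ('n \<Rightarrow> real^'d) set) (self_attention A (mat 1))"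
      proof (rule bound)
        have "(1 - t) * \<bar>p\<bar> \<le> 1 * \<bar>p\<bar>" by (rule mult_right_mono) (use t in auto)
        moreover have "\<bar>(1 - t) * p\<bar> = (1 - t) * \<bar>p\<bar>" using t by (simp add: abs_mult)
        ultimately show "\<bar>(1 - t) * p\<bar> \<le> R" using pR by linarith
        show "(1 - t) * p \<noteq> p" using t p0 by simp
      qed
    qed
  qed
  have main: "ereal (sqrt N * w p) \<le> lip_on (ball_tokens R :: ('n \<Rightarrow> real^'d) set) (self_attention A (mat 1))"
    by (rule tendsto_le[OF trivial_limit_at_right_real tendsto_const lim ev])
  have "sqrt N * w p = sqrt N / (1 + N * exp (- (lam * q * (p - q))))"
  proof -
    have "exp (- (lam * q * (p - q))) = E0 / exp (m * p)"
    proof -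
      have "- (lam * q * (p - q)) = lam * q * q - m * p" by (simp add: m_def algebra_simps)
      then show ?thesis by (simp only: E0_def exp_diff)
    qed
    moreover have "w p = 1 / (1 + N * (E0 / exp (m * p)))"
    proof -
      have e: "exp (m * p) > 0" by simp
      have "N * E0 > 0" using K0 by (simp add: K_def)
      have "1 + N * (E0 / exp (m * p)) = (exp (m * p) + N * E0) / exp (m * p)"
        using e by (simp add: add_divide_distrib)
      then show ?thesis unfolding w_def K_def by simp
    qed
    ultimately show ?thesis by simp
  qed
  then show ?thesis using main by (simp add: N_def)
qed



lemma unit_eig:
  fixes A :: "real^'d^'d"
  assumes "lam \<in> real_eigenvalues A"
  obtains u where "A *v u = lam *\<^sub>R u" "norm u = 1"
proof -
  obtain v where v: "v \<noteq> 0" "A *v v = lam *\<^sub>R v" using assms unfolding real_eigenvalues_def by blast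
  define u where "u = (1 / norm v) *\<^sub>R v"
  have "A *v u = lam *\<^sub>R u" unfolding u_def by (simp add: matrix_vector_mult_scaleR v(2))
  moreover have "norm u = 1" unfolding u_def using v(1) by simp
  ultimately show ?thesis using that by blast
qed

theorem mainTheorem2:
  fixes Q K :: "real^'d^'d" and R :: real
  assumes n2: "CARD('n::finite) \<ge> 2"
    and A_def: "A = (1 / sqrt (real CARD('d))) *\<^sub>R (transpose K ** Q)"
    and eig: "real_eigenvalues A \<noteq> {}"
    and gam: "\<gamma> = max (- Min (real_eigenvalues A)) (Max (real_eigenvalues A) / 8)"
    and R: "R > 0"
  shows "ereal (sqrt (real CARD('n) - 1) / (1 + (real CARD('n) - 1) * exp (- 2 * R\<^sup>2 * \<gamma>)))
           \<le> lip_on (ball_tokens R :: ('n \<Rightarrow> real^'d) set) (self_attention A (mat 1))"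
proof -
  have fin: "finite (real_eigenvalues A)" by (rule eig_finite)
  have mn: "Min (real_eigenvalues A) \<in> real_eigenvalues A" using fin eig by simp
  have mx: "Max (real_eigenvalues A) \<in> real_eigenvalues A" using fin eig by simp
  have le: "Min (real_eigenvalues A) \<le> Max (real_eigenvalues A)" using fin eig by simp
  show ?thesis
  proof (cases "- Min (real_eigenvalues A) \<ge> Max (real_eigenvalues A) / 8")
    case True
    define lam where "lam = Min (real_eigenvalues A)"
    obtain u where u: "A *v u = lam *\<^sub>R u" "norm u = 1" using unit_eig[OF mn] lam_def by blast
    have l0: "lam \<le> 0" using True le lam_def by linarith
    have g: "\<gamma> = - lam" using gam True lam_def by simp
    have c: "lam * R * (- R - R) \<ge> 0" using l0 R by (simp add: mult_nonpos_nonneg)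
    have e: "- 2 * R\<^sup>2 * \<gamma> = - (lam * R * (- R - R))" by (simp add: g power2_eq_square algebra_simps)
    show ?thesis unfolding e
      by (rule key[OF n2 u]) (use R c in auto)
  next
    case False
    define lam where "lam = Max (real_eigenvalues A)"
    obtain u where u: "A *v u = lam *\<^sub>R u" "norm u = 1" using unit_eig[OF mx] lam_def by blast
    have l0: "lam \<ge> 0" using False le lam_def by linarith
    have g: "\<gamma> = lam / 8" using gam False lam_def by simp
    have c: "lam * (R / 2) * (R - R / 2) \<ge> 0" using l0 R by simp
    have e: "- 2 * R\<^sup>2 * \<gamma> = - (lam * (R / 2) * (R - R / 2))" by (simp add: g power2_eq_square algebra_simps)
    show ?thesis unfolding e
      by (rule key[OF n2 u]) (use R c in auto)
  qed
qed


end
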